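(* For all integers $i,j,k,m\ge0$: if $\omega_i+\omega_j+\omega_k-\omega_m=0$, or $\omega_i+\omega_j-\omega_k+\omega_m=0$, or $\omega_i-\omega_j+\omega_k+\omega_m=0$, or $-\omega_i+\omega_j+\omega_k+\omega_m=0$, then $C_{ijkm}=0$.
   Context: $\omega_n=n+1$ and $C_{ijkm}=\frac2\pi\int_{-1}^1U_i(y)U_j(y)U_k(y)U_m(y)\sqrt{1-y^2}\,dy$, $U_n$ the Chebyshev polynomial of the second kind of degree $n$. *)

theory Defs
  imports "HOL-Analysis.Analysis"
begin

fun chebyU :: "nat \<Rightarrow> real \<Rightarrow> real" where
  "chebyU 0 y = 1"
| "chebyU (Suc 0) y = 2 * y"
| "chebyU (Suc (Suc n)) y = 2 * y * chebyU (Suc n) y - chebyU n y"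

definition omega :: "nat \<Rightarrow> int" where
  "omega n = int n + 1"

definition C :: "nat \<Rightarrow> nat \<Rightarrow> nat \<Rightarrow> nat \<Rightarrow> real" where
  "C i j k m = 2 / pi * integral {-1..1}
     (\<lambda>y. chebyU i y * chebyU j y * chebyU k y * chebyU m y * sqrt (1 - y\<^sup>2))"

end

theory Submission
  imports Defs
begin

inductive sp :: "nat \<Rightarrow> (real \<Rightarrow> real) \<Rightarrow> bool" for N where
  zero: "sp N (\<lambda>t. 0)"
| base: "1 \<le> s \<Longrightarrow> s \<le> N \<Longrightarrow> sp N (\<lambda>t. sin (real s * t))"
| add: "sp N f \<Longrightarrow> sp N g \<Longrightarrow> sp N (\<lambda>t. f t + g t)"
| smult: "sp N f \<Longrightarrow> sp N (\<lambda>t. r * f t)"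

lemma sp_cong: "sp N f \<Longrightarrow> (\<And>t. f t = g t) \<Longrightarrow> sp N g"
proof -
  assume "sp N f" "\<And>t. f t = g t"
  then have "f = g" by auto
  with \<open>sp N f\<close> show ?thesis by simp
qed

lemma sp_cong2: "sp N f \<Longrightarrow> N = N' \<Longrightarrow> (\<And>t. f t = g t) \<Longrightarrow> sp N' g"
  using sp_cong by blast

lemma sp_mono: "sp N f \<Longrightarrow> N \<le> N' \<Longrightarrow> sp N' f"
  by (induction rule: sp.induct) (auto intro: sp.intros)

lemma sp_diff: "sp N f \<Longrightarrow> sp N g \<Longrightarrow> sp N (\<lambda>t. f t - g t)"
proof -
  assume a: "sp N f" "sp N g"
  have "sp N (\<lambda>t. f t + (-1) * g t)" using a by (intro sp.add sp.smult)
  then show ?thesis by (rule sp_cong) simp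
qed

lemma cos_sin_prod: "cos t * sin (real s * t) = sin (real (s+1) * t) / 2 + sin ((real s - 1) * t) / 2"
proof -
  have "sin (real (s+1) * t) = sin (real s * t + t)" by (simp add: algebra_simps)
  moreover have "sin ((real s - 1) * t) = sin (real s * t - t)" by (simp add: algebra_simps)
  ultimately show ?thesis by (simp add: sin_add sin_diff field_simps)
qed

lemma cos_sin_prod2: "cos t * sin (real (Suc r) * t) = sin (real (r+2) * t) / 2 + sin (real r * t) / 2"
  using cos_sin_prod[of t "Suc r"] by (simp add: add.commute)

lemma sp_cos: "sp N f \<Longrightarrow> sp (N+1) (\<lambda>t. cos t * f t)"
proof (induction rule: sp.induct)
  case zero
  then show ?case by (simp add: sp.zero)
next
  case (base s)
  show ?case
  proof (cases "s = 1")
    case True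
    have "sp (N+1) (\<lambda>t. (1/2) * sin (real 2 * t))" using base by (intro sp.intros) auto
    then show ?thesis by (rule sp_cong) (simp add: True cos_sin_prod sin_double)
  next
    case False
    then obtain r where r: "s = Suc r" "r \<ge> 1" using base by (cases s) auto
    have "sp (N+1) (\<lambda>t. (1/2) * sin (real (s+1) * t) + (1/2) * sin (real r * t))"
      using base r by (intro sp.intros) auto
    then show ?thesis by (rule sp_cong) (simp only: r(1) cos_sin_prod2, simp)
  qed
next
  case (add f g)
  have "sp (N+1) (\<lambda>t. cos t * f t + cos t * g t)" using add by (intro sp.intros)
  then show ?case by (rule sp_cong) (simp add: algebra_simps)
next
  case (smult f r)
  have "sp (N+1) (\<lambda>t. r * (cos t * f t))" using smult by (intro sp.intros)
  then show ?case by (rule sp_cong) (simp add: algebra_simps)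
qed

lemma sp_U: "sp N f \<Longrightarrow> sp (N+a) (\<lambda>t. chebyU a (cos t) * f t)"
proof (induction a rule: less_induct)
  case (less a)
  show ?case
  proof (cases a)
    case 0
    then show ?thesis using less by simp
  next
    case (Suc a')
    show ?thesis
    proof (cases a')
      case 0
      have "sp (N+1) (\<lambda>t. 2 * (cos t * f t))" using less by (intro sp.intros sp_cos)
      then show ?thesis by (rule sp_cong2) (simp_all add: \<open>a = Suc a'\<close> \<open>a' = 0\<close>)
    next
      case (Suc n)
      have ih1: "sp (N + Suc n) (\<lambda>t. chebyU (Suc n) (cos t) * f t)"
        using less.IH[of "Suc n"] less.prems \<open>a = Suc a'\<close> Suc by auto
      have ih2: "sp (N + n) (\<lambda>t. chebyU n (cos t) * f t)"
        using less.IH[of n] less.prems \<open>a = Suc a'\<close> Suc by auto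
      have h1: "sp (N + Suc n + 1) (\<lambda>t. 2 * (cos t * (chebyU (Suc n) (cos t) * f t)))"
        using ih1 by (intro sp.intros sp_cos)
      have h2: "sp (N + Suc n + 1) (\<lambda>t. chebyU n (cos t) * f t)"
        using ih2 by (rule sp_mono) auto
      show ?thesis using sp_diff[OF h1 h2] by (rule sp_cong2) (simp_all add: \<open>a = Suc a'\<close> \<open>a' = Suc n\<close> algebra_simps)
    qed
  qed
qed

lemma U_sin: "chebyU n (cos t) * sin t = sin (real (n+1) * t)"
proof (induction n t rule: chebyU.induct)
  case (1 y)
  then show ?case by simp
next
  case (2 y)
  then show ?case by (simp add: sin_double)
next
  case (3 n t)
  have a: "sin (real (n+3) * t) = sin (real (n+2) * t + t)" by (simp add: algebra_simps)
  have b: "sin (real (n+1) * t) = sin (real (n+2) * t - t)" by (simp add: algebra_simps)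
  have "chebyU (Suc (Suc n)) (cos t) * sin t
     = 2 * cos t * (chebyU (Suc n) (cos t) * sin t) - chebyU n (cos t) * sin t"
    by (simp add: algebra_simps)
  also have "\<dots> = 2 * cos t * sin (real (n+2) * t) - sin (real (n+1) * t)"
    using 3 by simp
  also have "\<dots> = sin (real (n+3) * t)" unfolding a b by (simp add: sin_add sin_diff)
  finally show ?case by (simp add: add.commute)
qed

lemma sp_antideriv:
  assumes "sp N f" "N < M"
  shows "\<exists>G. (\<forall>t. (G has_real_derivative f t * sin (real M * t)) (at t)) \<and> G 0 = 0 \<and> G pi = 0"
  using assms
proof (induction rule: sp.induct)
  case zero
  then show ?case by (intro exI[of _ "\<lambda>t. 0"]) auto
next
  case (base s)
  define p where "p = M - s"
  define q where "q = M + s"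
  have pq: "p > 0" "q > 0" using base by (auto simp: p_def q_def)
  define G where "G t = (sin (real p * t) / real p - sin (real q * t) / real q) / 2" for t
  have "(G has_real_derivative sin (real s * t) * sin (real M * t)) (at t)" for t
  proof -
    have "(G has_real_derivative (cos (real p * t) * real p / real p - cos (real q * t) * real q / real q) / 2) (at t)"
      unfolding G_def by (auto intro!: derivative_eq_intros)
    moreover have "(cos (real p * t) * real p / real p - cos (real q * t) * real q / real q) / 2
        = sin (real s * t) * sin (real M * t)"
    proof -
      have e1: "real p * t = real M * t - real s * t" using base by (simp add: p_def of_nat_diff algebra_simps)
      have e2: "real q * t = real M * t + real s * t" by (simp add: q_def algebra_simps)
      show ?thesis using pq unfolding e1 e2 by (simp add: cos_add cos_diff)
    qed
    ultimately show ?thesis by simp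
  qed
  moreover have "G 0 = 0" by (simp add: G_def)
  moreover have "G pi = 0" by (simp add: G_def)
  ultimately show ?case by blast
next
  case (add f g)
  then obtain G1 G2 where
    "\<forall>t. (G1 has_real_derivative f t * sin (real M * t)) (at t)" "G1 0 = 0" "G1 pi = 0"
    "\<forall>t. (G2 has_real_derivative g t * sin (real M * t)) (at t)" "G2 0 = 0" "G2 pi = 0"
    by blast
  then show ?case
    by (intro exI[of _ "\<lambda>t. G1 t + G2 t"]) (auto intro!: derivative_eq_intros simp: algebra_simps)
next
  case (smult f r)
  then obtain G1 where
    "\<forall>t. (G1 has_real_derivative f t * sin (real M * t)) (at t)" "G1 0 = 0" "G1 pi = 0"
    by blast
  then show ?case
    by (intro exI[of _ "\<lambda>t. r * G1 t"]) (auto intro!: derivative_eq_intros simp: algebra_simps)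
qed

lemma core:
  assumes "n = a + b + c + 2"
  shows "((\<lambda>y. chebyU a y * chebyU b y * chebyU c y * chebyU n y * sqrt (1 - y\<^sup>2)) has_integral 0) {-1..1}"
proof -
  have "sp 1 (\<lambda>t. 1 * sin (real 1 * t))" by (intro sp.intros) auto
  then have "sp 1 sin" by (rule sp_cong) simp
  then have "sp (1+c+b+a) (\<lambda>t. chebyU a (cos t) * (chebyU b (cos t) * (chebyU c (cos t) * sin t)))"
    by (intro sp_U)
  then obtain G where G: "\<And>t. (G has_real_derivative
      (chebyU a (cos t) * (chebyU b (cos t) * (chebyU c (cos t) * sin t))) * sin (real (n+1) * t)) (at t)"
    "G 0 = 0" "G pi = 0"
    using sp_antideriv[of "1+c+b+a" _ "n+1"] assms by auto
  let ?P = "\<lambda>y. chebyU a y * chebyU b y * chebyU c y * chebyU n y"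
  have G': "(G has_real_derivative ?P (cos t) * (sin t)^2) (at t)" for t
    using G(1)[of t] U_sin[of n t, symmetric] by (simp add: power2_eq_square algebra_simps)
  define F where "F y = - G (arccos y)" for y
  have "((\<lambda>y. ?P y * sqrt (1 - y\<^sup>2)) has_integral (F 1 - F (-1))) {-1..1}"
  proof (rule fundamental_theorem_of_calculus_interior)
    show "continuous_on {-1..1} F" unfolding F_def
    proof (intro continuous_on_minus continuous_on_compose2[of UNIV G _ arccos])
      show "continuous_on UNIV G"
        by (rule DERIV_continuous_on[where D="\<lambda>t. ?P (cos t) * (sin t)^2"])
           (use G' in \<open>auto intro: has_field_derivative_at_within\<close>)
      show "continuous_on {-1..1} arccos" by (rule continuous_on_arccos')
    qed auto
    fix y :: real assume y: "y \<in> {-1<..<1}"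
    have s: "sqrt (1 - y\<^sup>2) > 0" using y by (auto simp: abs_square_less_1)
    have "(F has_real_derivative - (?P (cos (arccos y)) * (sin (arccos y))^2 * inverse (- sqrt (1 - y\<^sup>2)))) (at y)"
      unfolding F_def using y
      by (intro derivative_intros DERIV_chain2[OF G'] DERIV_arccos) auto
    moreover have "- (?P (cos (arccos y)) * (sin (arccos y))^2 * inverse (- sqrt (1 - y\<^sup>2)))
       = ?P y * sqrt (1 - y\<^sup>2)"
      using y s by (simp add: sin_arccos cos_arccos field_simps)
    ultimately show "(F has_vector_derivative ?P y * sqrt (1 - y\<^sup>2)) (at y)"
      by (simp add: has_real_derivative_iff_has_vector_derivative)
  qed simp
  moreover have "F 1 - F (-1) = 0" using G by (simp add: F_def)
  ultimately show ?thesis by simp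
qed

lemma core2:
  assumes "n = a + b + c + 2"
    and "\<And>y. f y = chebyU a y * chebyU b y * chebyU c y * chebyU n y * sqrt (1 - y\<^sup>2)"
  shows "(f has_integral 0) {-1..1}"
proof -
  have "f = (\<lambda>y. chebyU a y * chebyU b y * chebyU c y * chebyU n y * sqrt (1 - y\<^sup>2))"
    using assms(2) by auto
  then show ?thesis using core[OF assms(1)] by simp
qed

theorem lemma5p1:
  fixes i j k m :: nat
  assumes "omega i + omega j + omega k - omega m = 0
         \<or> omega i + omega j - omega k + omega m = 0
         \<or> omega i - omega j + omega k + omega m = 0
         \<or> - omega i + omega j + omega k + omega m = 0"
  shows "C i j k m = 0"
proof -
  let ?f = "\<lambda>y. chebyU i y * chebyU j y * chebyU k y * chebyU m y * sqrt (1 - y\<^sup>2)"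
  have "(?f has_integral 0) {-1..1}"
  proof -
    have "m = i + j + k + 2 \<or> k = i + j + m + 2 \<or> j = i + k + m + 2 \<or> i = j + k + m + 2"
      using assms unfolding omega_def by linarith
    then show ?thesis
    proof (elim disjE)
      assume "m = i + j + k + 2"
      then show ?thesis by (rule core2) simp
    next
      assume "k = i + j + m + 2"
      then show ?thesis by (rule core2) (simp only: mult_ac)
    next
      assume "j = i + k + m + 2"
      then show ?thesis by (rule core2) (simp only: mult_ac)
    next
      assume "i = j + k + m + 2"
      then show ?thesis by (rule core2) (simp only: mult_ac)
    qed
  qed
  then have "integral {-1..1} ?f = 0" by (rule integral_unique)
  then show ?thesis unfolding C_def by simp
qed

end
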